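(* Let $m\ge 1$, let $f_1,\ldots,f_{m+1}$ be arithmetic functions, and let $\gamma_0,\gamma_1,\ldots,\gamma_m\in\mathbb{N}$ satisfy $\gamma_0=1$ and $\gamma_0\mid\gamma_1\mid\gamma_2\mid\cdots\mid\gamma_m$. Then for all $s\in\mathbb{C}$ with $\Re(s)>\max\{\sigma(f_1),\ldots,\sigma(f_{m+1})\}$, \[ L\bigl(s;f_{m+1}*_{\gamma_m}\cdots*_{\gamma_1}f_1\bigr)=\prod_{j=1}^{m+1}L\bigl(s;f_j^{[\gamma_{j-1}]}\bigr). \]
   Context: $\mathbb{N}=\{1,2,3,\ldots\}$. An arithmetic function is a map $f:\mathbb{N}\to\mathbb{C}$; by convention $f(x)=0$ whenever $x\notin\mathbb{N}$ (e.g. for non-integral rationals $x$). For $\gamma\in\mathbb{N}$, let $a_\gamma(n)=1$ if $n=d^\gamma$ for some $d\in\mathbb{N}$ and $a_\gamma(n)=0$ otherwise, and put $f^{[\gamma]}(n):=a_\gamma(n)f(n)$. For an arithmetic function $f$, $L(s;f):=\sum_{n\ge1}f(n)n^{-s}$ and $\sigma(f)\in\mathbb{R}\cup\{\pm\infty\}$ is the abscissa of absolute convergence of this series. For $\gamma_1,\ldots,\gamma_m\in\mathbb{N}$ and arithmetic functions $f_1,\ldots,f_{m+1}$, the $(\gamma_1,\ldots,\gamma_m)$-convolution is the arithmetic function \[ (f_{m+1}*_{\gamma_m}\cdots*_{\gamma_1}f_1)(n):=\sum_{\substack{(d_1,\ldots,d_m)\in\mathbb{N}^m\\ d_m^{\gamma_m}\mid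 d_{m-1}^{\gamma_{m-1}}\mid\cdots\mid d_1^{\gamma_1}\mid n}} f_1\Bigl(\frac{n}{d_1^{\gamma_1}}\Bigr)f_2\Bigl(\frac{d_1^{\gamma_1}}{d_2^{\gamma_2}}\Bigr)\cdots f_m\Bigl(\frac{d_{m-1}^{\gamma_{m-1}}}{d_m^{\gamma_m}}\Bigr)f_{m+1}\bigl(d_m^{\gamma_m}\bigr). \] *)

theory Defs
  imports "HOL-Analysis.Analysis"
begin

text \<open>Arithmetic functions are modelled as nat => complex; the value at 0 is never used.\<close>

definition dirichlet_L :: "complex \<Rightarrow> (nat \<Rightarrow> complex) \<Rightarrow> complex" where
  "dirichlet_L s f = (\<Sum>n. f (Suc n) * of_nat (Suc n) powr (- s))"

text \<open>Abscissa of absolute convergence, in the extended reals (Inf of empty set is +infinity).\<close>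
definition abs_abscissa :: "(nat \<Rightarrow> complex) \<Rightarrow> ereal" where
  "abs_abscissa f = Inf {ereal x | x. summable (\<lambda>n. norm (f (Suc n)) * real (Suc n) powr (- x))}"

definition is_gamma_power :: "nat \<Rightarrow> nat \<Rightarrow> bool" where
  "is_gamma_power \<gamma> n \<longleftrightarrow> (\<exists>d::nat. d \<ge> 1 \<and> n = d ^ \<gamma>)"

definition restr_power :: "nat \<Rightarrow> (nat \<Rightarrow> complex) \<Rightarrow> nat \<Rightarrow> complex" where
  "restr_power \<gamma> f n = (if is_gamma_power \<gamma> n then f n else 0)"

text \<open>Since each gamma_i >= 1, d_i^gamma_i | n forces d_i <= n,
  so restricting d_i to {1..n} loses nothing.\<close>
definition gconv :: "nat \<Rightarrow> (nat \<Rightarrow> nat) \<Rightarrow> (nat \<Rightarrow> nat \<Rightarrow> complex) \<Rightarrow> nat \<Rightarrow> complex" where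
  "gconv m \<gamma> f n =
     (let D = (\<lambda>d i. if i = 0 then n else if i = Suc m then 1 else d i ^ \<gamma> i) in
      \<Sum>d \<in> {d \<in> {1..m} \<rightarrow>\<^sub>E {1..n}. \<forall>i\<in>{1..m}. D d i dvd D d (i - 1)}.
         \<Prod>j\<in>{1..Suc m}. f j (D d (j - 1) div D d j))"

end

theory Submission
  imports Defs
begin

lemma gamma_dvd_chain:
  assumes "\<forall>i\<in>{1..m}. \<gamma> (i - 1) dvd (\<gamma>::nat\<Rightarrow>nat) i" "i \<le> j" "j \<le> m"
  shows "\<gamma> i dvd \<gamma> j"
  using assms(2,3)
proof (induction j)
  case 0 then show ?case by simp
next
  case (Suc j)
  show ?case
  proof (cases "i = Suc j")
    case True then show ?thesis by simp
  next
    case False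
    then have "\<gamma> i dvd \<gamma> j" using Suc by auto
    moreover have "\<gamma> j dvd \<gamma> (Suc j)" using assms(1) Suc.prems by (metis atLeastAtMost_iff diff_Suc_1 le_add1 plus_1_eq_Suc)
    ultimately show ?thesis by (rule dvd_trans)
  qed
qed

lemma pow_inj_nat:
  assumes "0 < (g::nat)" "a ^ g = (b::nat) ^ g" shows "a = b"
  using power_eq_iff_eq_base[of g a b] assms by simp

lemma P_step:
  fixes k :: "nat \<Rightarrow> nat"
  assumes "1 \<le> i" "i \<le> Suc m"
  shows "(\<Prod>l\<in>{i..Suc m}. e l (k l)) = e i (k i) * (\<Prod>l\<in>{Suc i..Suc m}. e l (k l))"
proof -
  have "{i..Suc m} = insert i {Suc i..Suc m}" using assms by auto
  then show ?thesis by simp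
qed

lemma comb:
  fixes m n :: nat and \<gamma> :: "nat \<Rightarrow> nat" and f :: "nat \<Rightarrow> nat \<Rightarrow> complex"
  assumes m: "m \<ge> 1" and g1: "\<forall>i\<in>{0..m}. \<gamma> i \<ge> 1" and g0: "\<gamma> 0 = 1"
    and gd: "\<forall>i\<in>{1..m}. \<gamma> (i - 1) dvd \<gamma> i" and n: "n \<ge> 1"
  shows "gconv m \<gamma> f n = (\<Sum>k\<in>{k \<in> PiE {1..m+1} (\<lambda>_. {1..}). (\<Prod>j\<in>{1..m+1}. k j ^ \<gamma> (j - 1)) = n}.
            \<Prod>j\<in>{1..m+1}. f j (k j ^ \<gamma> (j - 1)))"
proof -
  define D where "D = (\<lambda>(d::nat\<Rightarrow>nat) i. if i = 0 then n else if i = Suc m then 1 else d i ^ \<gamma> i)"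
  define S where "S = {d \<in> {1..m} \<rightarrow>\<^sub>E {1..n}. \<forall>i\<in>{1..m}. D d i dvd D d (i - 1)}"
  define T where "T = {k \<in> PiE {1..m+1} (\<lambda>_. {1..}). (\<Prod>j\<in>{1..m+1}. k j ^ \<gamma> (j - 1)) = n}"
  define P where "P = (\<lambda>(k::nat\<Rightarrow>nat) i. \<Prod>l\<in>{Suc i..Suc m}. k l ^ \<gamma> (l - 1))"
  define \<psi>0 where "\<psi>0 = (\<lambda>(k::nat\<Rightarrow>nat) i. \<Prod>l\<in>{Suc i..Suc m}. k l ^ (\<gamma> (l - 1) div \<gamma> i))"
  define \<psi> where "\<psi> = (\<lambda>k i. if i \<in> {1..m} then \<psi>0 k i else undefined)"
  define dd where "dd = (\<lambda>(d::nat\<Rightarrow>nat) i. if i = 0 then n else d i)"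
  define \<phi> where "\<phi> = (\<lambda>d j. if j \<in> {1..Suc m} then (if j = Suc m then d m
                           else dd d (j - 1) div d j ^ (\<gamma> j div \<gamma> (j - 1))) else undefined)"
  have gconv_eq: "gconv m \<gamma> f n = (\<Sum>d\<in>S. \<Prod>j\<in>{1..Suc m}. f j (D d (j - 1) div D d j))"
    unfolding gconv_def S_def D_def Let_def by simp
  have int1: "{1..m+1} = {Suc 0..Suc m}" by simp
  have gpos: "0 < \<gamma> i" if "i \<le> m" for i
  proof -
    have "\<gamma> i \<ge> 1" using g1 that by simp
    then show ?thesis by simp
  qed
  have gdvd: "i \<le> j \<Longrightarrow> j \<le> m \<Longrightarrow> \<gamma> i dvd \<gamma> j" for i j using gamma_dvd_chain[OF gd] by blast
  have psi0_pow: "\<psi>0 k i ^ \<gamma> i = P k i" if "i \<le> m" for k i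
  proof -
    have "\<psi>0 k i ^ \<gamma> i = (\<Prod>l\<in>{Suc i..Suc m}. (k l ^ (\<gamma> (l - 1) div \<gamma> i)) ^ \<gamma> i)"
      unfolding \<psi>0_def by (rule prod_power_distrib)
    also have "\<dots> = P k i" unfolding P_def
    proof (rule prod.cong[OF refl])
      fix l assume "l \<in> {Suc i..Suc m}"
      then have "\<gamma> i dvd \<gamma> (l - 1)" using gdvd[of i "l - 1"] by auto
      then show "(k l ^ (\<gamma> (l - 1) div \<gamma> i)) ^ \<gamma> i = k l ^ \<gamma> (l - 1)"
        by (simp add: power_mult[symmetric])
    qed
    finally show ?thesis .
  qed
  have P_step: "P k (i - 1) = k i ^ \<gamma> (i - 1) * P k i" if "1 \<le> i" "i \<le> Suc m" for k i
  proof -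
    have "{Suc (i - 1)..Suc m} = insert i {Suc i..Suc m}" using that by auto
    then show ?thesis unfolding P_def by simp
  qed
  have P_last: "P k (Suc m) = 1" for k unfolding P_def by simp
  have P_pos: "P k i > 0" if "\<forall>j\<in>{1..Suc m}. k j \<ge> 1" for k i
    unfolding P_def
  proof (intro prod_pos)
    fix l assume "l \<in> {Suc i..Suc m}"
    then have "k l \<ge> 1" using that by auto
    then show "0 < k l ^ \<gamma> (l - 1)" by simp
  qed
  have P_dvd: "P k i dvd P k j" if "j \<le> i" for k i j
    unfolding P_def by (rule prod_dvd_prod_subset) (use that in auto)
  have psi0_0: "\<psi>0 k 0 = P k 0" for k unfolding \<psi>0_def P_def g0 by simp
  have T_pos: "k j \<ge> 1" if "k \<in> T" "j \<in> {1..Suc m}" for k j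
    using that unfolding T_def by (auto simp: PiE_iff)
  have T_ext: "k j = undefined" if "k \<in> T" "j \<notin> {1..Suc m}" for k j
    using that unfolding T_def by (auto simp: PiE_iff extensional_def)
  have T_P0: "P k 0 = n" if "k \<in> T" for k using that unfolding T_def P_def int1 by simp
  have D_psi: "D (\<psi> k) i = P k i" if "k \<in> T" "i \<le> Suc m" for k i
  proof -
    have "i = 0 \<or> i = Suc m \<or> i \<in> {1..m}" using that(2) by auto
    then consider "i = 0" | "i = Suc m" | "i \<in> {1..m}" by blast
    then show ?thesis
    proof cases
      case 1 then show ?thesis using T_P0[OF that(1)] unfolding D_def by simp
    next
      case 2 then show ?thesis using P_last unfolding D_def by simp
    next
      case 3 then show ?thesis unfolding D_def \<psi>_def using psi0_pow[of i k] by auto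
    qed
  qed
  have S_props: "d i \<in> {1..n}" "d i ^ \<gamma> i dvd dd d (i - 1) ^ \<gamma> (i - 1)" if "d \<in> S" "i \<in> {1..m}" for d i
  proof -
    show "d i \<in> {1..n}" using that unfolding S_def by (auto simp: PiE_iff)
    have "D d i dvd D d (i - 1)" using that unfolding S_def by auto
    moreover have "D d i = d i ^ \<gamma> i" using that unfolding D_def by auto
    moreover have "D d (i - 1) = dd d (i - 1) ^ \<gamma> (i - 1)" using that g0 unfolding D_def dd_def by auto
    ultimately show "d i ^ \<gamma> i dvd dd d (i - 1) ^ \<gamma> (i - 1)" by simp
  qed
  have S_ext: "d i = undefined" if "d \<in> S" "i \<notin> {1..m}" for d i
    using that unfolding S_def by (auto simp: PiE_iff extensional_def)
  have dd_pos: "dd d i \<ge> 1" if "d \<in> S" "i \<le> m" for d i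
    using S_props(1)[OF that(1), of i] that n unfolding dd_def by auto
  have rel: "dd d (i - 1) = \<phi> d i * d i ^ (\<gamma> i div \<gamma> (i - 1))" if "d \<in> S" "i \<in> {1..m}" for d i
  proof -
    let ?r = "\<gamma> i div \<gamma> (i - 1)"
    have "\<gamma> i = ?r * \<gamma> (i - 1)" using gd that(2) by auto
    then have "(d i ^ ?r) ^ \<gamma> (i - 1) dvd dd d (i - 1) ^ \<gamma> (i - 1)"
      using S_props(2)[OF that] by (metis power_mult)
    moreover have "0 < \<gamma> (i - 1)" using gpos[of "i - 1"] that by auto
    ultimately have "d i ^ ?r dvd dd d (i - 1)" using pow_divides_pow_iff by blast
    moreover have "\<phi> d i = dd d (i - 1) div d i ^ ?r" using that unfolding \<phi>_def by auto
    ultimately show ?thesis by simp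
  qed
  have phi_pos: "\<phi> d j \<ge> 1" if "d \<in> S" "j \<in> {1..Suc m}" for d j
  proof (cases "j = Suc m")
    case True then show ?thesis using S_props(1)[OF that(1), of m] m unfolding \<phi>_def by auto
  next
    case False
    then have j: "j \<in> {1..m}" using that by auto
    have "dd d (j - 1) \<ge> 1" using dd_pos[OF that(1), of "j - 1"] j by auto
    then show ?thesis using rel[OF that(1) j] by (metis less_one mult_is_0 not_le)
  qed
  have P_phi: "P (\<phi> d) i = dd d i ^ \<gamma> i" if d: "d \<in> S" and i: "i \<le> m" for d i
  proof -
    have "\<forall>t. t \<le> m \<longrightarrow> P (\<phi> d) (m - t) = dd d (m - t) ^ \<gamma> (m - t)"
    proof (intro allI)
      fix t show "t \<le> m \<longrightarrow> P (\<phi> d) (m - t) = dd d (m - t) ^ \<gamma> (m - t)"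
      proof (induction t)
        case 0
        have "P (\<phi> d) m = \<phi> d (Suc m) ^ \<gamma> m * P (\<phi> d) (Suc m)"
          using P_step[of "Suc m" "\<phi> d"] by simp
        also have "\<dots> = dd d m ^ \<gamma> m" using P_last m unfolding \<phi>_def dd_def by simp
        finally show ?case by simp
      next
        case (Suc t)
        show ?case
        proof
          assume t: "Suc t \<le> m"
          define i where "i = m - t"
          have i1: "i \<in> {1..m}" using t unfolding i_def by auto
          have mi: "m - Suc t = i - 1" unfolding i_def by simp
          have IH: "P (\<phi> d) i = d i ^ \<gamma> i"
            using Suc t i1 unfolding i_def dd_def by auto
          let ?r = "\<gamma> i div \<gamma> (i - 1)"
          have gi: "\<gamma> i = ?r * \<gamma> (i - 1)" using gd i1 by auto
          have "P (\<phi> d) (i - 1) = \<phi> d i ^ \<gamma> (i - 1) * P (\<phi> d) i"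
            using P_step[of i "\<phi> d"] i1 by auto
          also have "\<dots> = \<phi> d i ^ \<gamma> (i - 1) * (d i ^ ?r) ^ \<gamma> (i - 1)"
            using IH gi by (metis power_mult mult.commute)
          also have "\<dots> = dd d (i - 1) ^ \<gamma> (i - 1)"
            using rel[OF d i1] by (simp add: power_mult_distrib)
          finally show "P (\<phi> d) (m - Suc t) = dd d (m - Suc t) ^ \<gamma> (m - Suc t)" using mi by simp
        qed
      qed
    qed
    from this[rule_format, of "m - i"] i show ?thesis by simp
  qed
  have sumeq: "(\<Sum>k\<in>T. \<Prod>j\<in>{1..m+1}. f j (k j ^ \<gamma> (j - 1))) = (\<Sum>d\<in>S. \<Prod>j\<in>{1..Suc m}. f j (D d (j - 1) div D d j))"
  proof (rule sum.reindex_bij_witness[of T \<phi> \<psi>])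
    fix k assume k: "k \<in> T"
    have kpos: "\<forall>j\<in>{1..Suc m}. k j \<ge> 1" using T_pos[OF k] by auto
    show "\<psi> k \<in> S" unfolding S_def
    proof (intro CollectI conjI ballI)
      show "\<psi> k \<in> {1..m} \<rightarrow>\<^sub>E {1..n}"
      proof (rule PiE_I)
        fix i assume i: "i \<in> {1..m}"
        have "\<psi>0 k i \<ge> 1" unfolding \<psi>0_def using kpos by (intro prod_ge_1) (auto simp: Suc_le_eq)
        moreover have "\<psi>0 k i \<le> \<psi>0 k i ^ \<gamma> i" using calculation gpos[of i] i by (intro self_le_power) auto
        moreover have "P k i \<le> n" using P_dvd[of 0 i k] T_P0[OF k] n by (intro dvd_imp_le) auto
        ultimately show "\<psi> k i \<in> {1..n}" using psi0_pow[of i k] i unfolding \<psi>_def by auto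
      next
        fix i assume "i \<notin> {1..m}" then show "\<psi> k i = undefined" unfolding \<psi>_def by auto
      qed
    next
      fix i assume i: "i \<in> {1..m}"
      show "D (\<psi> k) i dvd D (\<psi> k) (i - 1)"
        using D_psi[OF k, of i] D_psi[OF k, of "i - 1"] P_dvd[of "i - 1" i k] i by auto
    qed
    show "(\<Prod>j\<in>{1..Suc m}. f j (D (\<psi> k) (j - 1) div D (\<psi> k) j)) = (\<Prod>j\<in>{1..m+1}. f j (k j ^ \<gamma> (j - 1)))"
      unfolding int1
    proof (rule prod.cong)
      fix j assume j: "j \<in> {Suc 0..Suc m}"
      have "D (\<psi> k) (j - 1) div D (\<psi> k) j = P k (j - 1) div P k j"
        using D_psi[OF k, of j] D_psi[OF k, of "j - 1"] j by auto
      also have "\<dots> = k j ^ \<gamma> (j - 1)" using P_step[of j k] P_pos[OF kpos, of j] j by auto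
      finally show "f j (D (\<psi> k) (j - 1) div D (\<psi> k) j) = f j (k j ^ \<gamma> (j - 1))" by simp
    qed simp
    show "\<phi> (\<psi> k) = k"
    proof
      fix j
      have "j = Suc m \<or> j \<in> {1..m} \<or> j \<notin> {1..Suc m}" by auto
      then consider "j = Suc m" | "j \<in> {1..m}" | "j \<notin> {1..Suc m}" by blast
      then show "\<phi> (\<psi> k) j = k j"
      proof cases
        case 1
        have "\<psi> k m = \<psi>0 k m" unfolding \<psi>_def using m by auto
        also have "\<dots> = k (Suc m)" unfolding \<psi>0_def using gpos[of m] by simp
        finally show ?thesis using 1 unfolding \<phi>_def by simp
      next
        case 2
        let ?r = "\<gamma> j div \<gamma> (j - 1)"
        let ?g = "\<gamma> (j - 1)"
        define x where "x = \<psi>0 k (j - 1)"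
        define y where "y = \<psi>0 k j ^ ?r"
        have gj: "\<gamma> j = ?r * ?g" using gd 2 by auto
        have ddx: "dd (\<psi> k) (j - 1) = x"
        proof (cases "j = 1")
          case True
          then have "dd (\<psi> k) (j - 1) = n" unfolding dd_def by simp
          then show ?thesis using True T_P0[OF k] psi0_0[of k] unfolding x_def by simp
        next
          case False
          then have "j - 1 \<in> {1..m}" using 2 by auto
          then have "\<psi> k (j - 1) = \<psi>0 k (j - 1)" unfolding \<psi>_def by (rule if_P)
          moreover have "dd (\<psi> k) (j - 1) = \<psi> k (j - 1)" unfolding dd_def using False 2 by auto
          ultimately show ?thesis unfolding x_def by simp
        qed
        have j1: "j \<in> {1..Suc m}" "j \<noteq> Suc m" using 2 by auto
        have "\<phi> (\<psi> k) j = dd (\<psi> k) (j - 1) div \<psi> k j ^ ?r"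
          unfolding \<phi>_def using j1 by (simp only: if_P if_not_P if_False)
        moreover have "\<psi> k j = \<psi>0 k j" unfolding \<psi>_def using 2 by (rule if_P)
        ultimately have phi_eq: "\<phi> (\<psi> k) j = x div y" using ddx unfolding y_def by simp
        have "y ^ ?g = \<psi>0 k j ^ (?r * ?g)" unfolding y_def by (simp add: power_mult)
        also have "\<dots> = \<psi>0 k j ^ \<gamma> j" using gj by simp
        also have "\<dots> = P k j" using psi0_pow[of j k] 2 by auto
        finally have "y ^ ?g = P k j" .
        moreover have "x ^ ?g = P k (j - 1)" unfolding x_def using psi0_pow[of "j - 1" k] 2 by auto
        moreover have "P k (j - 1) = k j ^ ?g * P k j" using P_step[of j k] 2 by auto
        ultimately have "x ^ ?g = (k j * y) ^ ?g" by (simp add: power_mult_distrib)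
        moreover have gg: "0 < ?g" using gpos[of "j - 1"] 2 by auto
        ultimately have "x = k j * y" using pow_inj_nat by blast
        moreover have "y \<noteq> 0"
        proof
          assume "y = 0"
          then have "y ^ ?g = 0" using gg by (simp add: power_0_left)
          then show False using \<open>y ^ ?g = P k j\<close> P_pos[OF kpos, of j] by linarith
        qed
        ultimately show ?thesis using phi_eq by simp
      next
        case 3
        then have "\<phi> (\<psi> k) j = undefined" unfolding \<phi>_def by (rule if_not_P)
        then show ?thesis using T_ext[OF k 3] by simp
      qed
    qed
  next
    fix d assume d: "d \<in> S"
    show "\<phi> d \<in> T" unfolding T_def
    proof (intro CollectI conjI)
      show "\<phi> d \<in> {1..m+1} \<rightarrow>\<^sub>E {1..}"
      proof (rule PiE_I)
        fix j assume "j \<in> {1..m+1}" then show "\<phi> d j \<in> {1..}" using phi_pos[OF d, of j] by simp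
      next
        fix j assume "j \<notin> {1..m+1}" then have "j \<notin> {1..Suc m}" by simp
        then show "\<phi> d j = undefined" unfolding \<phi>_def by (rule if_not_P)
      qed
      have "(\<Prod>j\<in>{1..m+1}. \<phi> d j ^ \<gamma> (j - 1)) = P (\<phi> d) 0" unfolding P_def int1 by simp
      also have "\<dots> = n" using P_phi[OF d, of 0] g0 unfolding dd_def by simp
      finally show "(\<Prod>j\<in>{1..m+1}. \<phi> d j ^ \<gamma> (j - 1)) = n" .
    qed
    show "\<psi> (\<phi> d) = d"
    proof
      fix i
      show "\<psi> (\<phi> d) i = d i"
      proof (cases "i \<in> {1..m}")
        case True
        have i: "i \<le> m" "i \<noteq> 0" using True by auto
        have "\<psi>0 (\<phi> d) i ^ \<gamma> i = P (\<phi> d) i" using psi0_pow[OF i(1)] by simp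
        also have "\<dots> = dd d i ^ \<gamma> i" using P_phi[OF d i(1)] by simp
        also have "dd d i = d i" using i(2) unfolding dd_def by simp
        finally have e: "\<psi>0 (\<phi> d) i ^ \<gamma> i = d i ^ \<gamma> i" .
        have "0 < \<gamma> i" using gpos[OF i(1)] .
        then have "\<psi>0 (\<phi> d) i = d i" using e pow_inj_nat by blast
        then show ?thesis using True unfolding \<psi>_def by simp
      next
        case False
        have "\<psi> (\<phi> d) i = undefined" unfolding \<psi>_def by (rule if_not_P[OF False])
        then show ?thesis using S_ext[OF d False] by simp
      qed
    qed
  qed
  show ?thesis using sumeq unfolding T_def gconv_eq by (rule sym)
qed


lemma bij_Suc_nat: "bij_betw Suc UNIV {1::nat..}"
  by (rule bij_betwI[where g = "\<lambda>n. n - 1"]) auto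

lemma series_to_infsum:
  fixes c :: "nat \<Rightarrow> complex"
  assumes "summable (\<lambda>n. norm (c (Suc n)))"
  shows "(\<lambda>n. norm (c n)) summable_on {1..}" and "(\<Sum>n. c (Suc n)) = infsum c {1..}"
proof -
  have "((\<lambda>n. c (Suc n)) has_sum (\<Sum>n. c (Suc n))) UNIV"
    by (rule norm_summable_imp_has_sum[OF assms summable_sums[OF summable_norm_cancel[OF assms]]])
  then have "(c has_sum (\<Sum>n. c (Suc n))) {1..}"
    using has_sum_reindex_bij_betw[OF bij_Suc_nat, of c] by simp
  then show "(\<Sum>n. c (Suc n)) = infsum c {1..}" by (rule infsumI[symmetric])
  have s2: "summable (\<lambda>n. norm (norm (c (Suc n))))" using assms by simp
  have "((\<lambda>n. norm (c (Suc n))) has_sum (\<Sum>n. norm (c (Suc n)))) UNIV"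
    by (rule norm_summable_imp_has_sum[OF s2 summable_sums[OF assms]])
  then have "((\<lambda>n. norm (c n)) has_sum (\<Sum>n. norm (c (Suc n)))) {1..}"
    using has_sum_reindex_bij_betw[OF bij_Suc_nat, of "\<lambda>n. norm (c n)"] by simp
  then show "(\<lambda>n. norm (c n)) summable_on {1..}" by (rule has_sum_imp_summable)
qed

lemma infsum_to_series:
  fixes c :: "nat \<Rightarrow> complex"
  assumes "c summable_on {1..}"
  shows "summable (\<lambda>n. norm (c (Suc n)))"
proof -
  have "(\<lambda>n. norm (c n)) summable_on {1..}"
    using assms summable_on_iff_abs_summable_on_complex by blast
  then obtain S where "((\<lambda>n. norm (c n)) has_sum S) {1..}" by (auto simp: summable_on_def)
  then have "((\<lambda>n. norm (c (Suc n))) has_sum S) UNIV"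
    using has_sum_reindex_bij_betw[OF bij_Suc_nat, of "\<lambda>n. norm (c n)"] by simp
  then show ?thesis using summable_on_imp_summable has_sum_imp_summable by blast
qed

lemma norm_nat_powr: "norm (of_nat n powr (z::complex)) = real n powr Re z"
  by (simp add: norm_powr_real_powr)

lemma prod_nat_powr:
  assumes "finite A"
  shows "(\<Prod>j\<in>A. (of_nat (x j) :: complex) powr z) = of_nat (\<Prod>j\<in>A. x j) powr z"
  using assms
proof (induction A rule: finite_induct)
  case empty then show ?case by simp
next
  case (insert a A)
  have "(of_nat (x a) * of_nat (\<Prod>j\<in>A. x j) :: complex) powr z
        = of_nat (x a) powr z * of_nat (\<Prod>j\<in>A. x j) powr z"
    by (rule powr_times_real) (auto simp del: of_nat_prod)
  moreover have "(of_nat (\<Prod>j\<in>insert a A. x j) :: complex) = of_nat (x a) * of_nat (\<Prod>j\<in>A. x j)"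
    using insert.hyps by (simp del: of_nat_prod)
  ultimately show ?case using insert.hyps insert.IH by (simp del: of_nat_prod)
qed

lemma abscissa_summable:
  fixes g :: "nat \<Rightarrow> complex"
  assumes "ereal \<sigma> > abs_abscissa g"
  shows "summable (\<lambda>n. norm (g (Suc n)) * real (Suc n) powr (- \<sigma>))"
proof -
  from assms obtain y where y: "y \<in> {ereal x | x. summable (\<lambda>n. norm (g (Suc n)) * real (Suc n) powr (-x))}"
    and "y < ereal \<sigma>"
    unfolding abs_abscissa_def using Inf_less_iff by blast
  then obtain x where x: "summable (\<lambda>n. norm (g (Suc n)) * real (Suc n) powr (-x))" and "x < \<sigma>"
    by auto
  show ?thesis
  proof (rule summable_comparison_test'[OF x])
    fix n :: nat
    have "real (Suc n) powr (- \<sigma>) \<le> real (Suc n) powr (- x)"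
      using \<open>x < \<sigma>\<close> by (intro powr_mono) auto
    then show "norm (norm (g (Suc n)) * real (Suc n) powr (- \<sigma>)) \<le> norm (g (Suc n)) * real (Suc n) powr (- x)"
      by (simp add: mult_left_mono)
  qed
qed


theorem proposition2p1:
  fixes m :: nat and f :: "nat \<Rightarrow> nat \<Rightarrow> complex" and \<gamma> :: "nat \<Rightarrow> nat" and s :: complex
  assumes "m \<ge> 1"
    and "\<forall>i\<in>{0..m}. \<gamma> i \<ge> 1"
    and "\<gamma> 0 = 1"
    and "\<forall>i\<in>{1..m}. \<gamma> (i - 1) dvd \<gamma> i"
    and "\<forall>j\<in>{1..m+1}. ereal (Re s) > abs_abscissa (f j)"
  shows "dirichlet_L s (gconv m \<gamma> f) = (\<Prod>j\<in>{1..m+1}. dirichlet_L s (restr_power (\<gamma> (j - 1)) (f j)))"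
proof -
  define a where "a = (\<lambda>j n. f j n * of_nat n powr (- s))"
  define b where "b = (\<lambda>j k. a j (k ^ \<gamma> (j - 1)))"
  define N where "N = (\<lambda>k::nat\<Rightarrow>nat. \<Prod>j\<in>{1..m+1}. k j ^ \<gamma> (j - 1))"
  define PK where "PK = PiE {1..m+1} (\<lambda>_. {1::nat..})"
  define Tn where "Tn = (\<lambda>n. {k \<in> PK. N k = n})"
  define H where "H = (\<lambda>k. \<Prod>j\<in>{1..m+1}. b j (k j))"
  define G where "G = (\<lambda>n. gconv m \<gamma> f n * of_nat n powr (- s))"
  have gpos: "0 < \<gamma> (j - 1)" if "j \<in> {1..m+1}" for j
  proof -
    have "\<gamma> (j - 1) \<ge> 1" using assms(2) that by auto
    then show ?thesis by simp
  qed
  have a_norm: "norm (a j n) = norm (f j n) * real n powr (- Re s)" for j n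
    unfolding a_def by (simp add: norm_mult norm_nat_powr)
  have fsum: "summable (\<lambda>n. norm (a j (Suc n)))" if "j \<in> {1..m+1}" for j
    using abscissa_summable[OF assms(5)[rule_format, OF that]] a_norm by simp
  have a_abs: "(\<lambda>n. norm (a j n)) summable_on {1..}" if "j \<in> {1..m+1}" for j
    using series_to_infsum(1)[OF fsum[OF that]] .
  have inj: "inj_on (\<lambda>k::nat. k ^ \<gamma> (j - 1)) {1..}" if "j \<in> {1..m+1}" for j
  proof (rule inj_onI)
    fix x y :: nat assume "x ^ \<gamma> (j - 1) = y ^ \<gamma> (j - 1)"
    then show "x = y" using pow_inj_nat gpos[OF that] by blast
  qed
  have img: "(\<lambda>k::nat. k ^ \<gamma> (j - 1)) ` {1..} \<subseteq> {1..}" for j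
    by auto
  have b_abs: "(\<lambda>k. norm (b j k)) summable_on {1..}" if j: "j \<in> {1..m+1}" for j
  proof -
    have "(\<lambda>n. norm (a j n)) summable_on ((\<lambda>k. k ^ \<gamma> (j - 1)) ` {1..})"
      by (rule summable_on_subset[OF a_abs[OF j] img])
    then have "((\<lambda>n. norm (a j n)) \<circ> (\<lambda>k. k ^ \<gamma> (j - 1))) summable_on {1..}"
      using summable_on_reindex[OF inj[OF j]] by blast
    then show ?thesis unfolding b_def o_def .
  qed
  have Lj: "dirichlet_L s (restr_power (\<gamma> (j - 1)) (f j)) = infsum (b j) {1..}" if j: "j \<in> {1..m+1}" for j
  proof -
    define g where "g = \<gamma> (j - 1)"
    define c where "c = (\<lambda>n. restr_power g (f j) n * of_nat n powr (- s))"
    have cs: "summable (\<lambda>n. norm (c (Suc n)))"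
    proof (rule summable_comparison_test'[OF fsum[OF j]])
      fix n :: nat
      show "norm (norm (c (Suc n))) \<le> norm (a j (Suc n))"
        unfolding c_def a_def restr_power_def by (auto simp: norm_mult)
    qed
    have "dirichlet_L s (restr_power g (f j)) = (\<Sum>n. c (Suc n))"
      unfolding dirichlet_L_def c_def ..
    also have "\<dots> = infsum c {1..}" by (rule series_to_infsum(2)[OF cs])
    also have "\<dots> = infsum c ((\<lambda>k. k ^ g) ` {1..})"
    proof (rule infsum_cong_neutral)
      fix x :: nat assume "x \<in> (\<lambda>k. k ^ g) ` {1..} - {1..}"
      then show "c x = 0" using img[of j] unfolding g_def by auto
    next
      fix x :: nat assume x: "x \<in> {1..} - (\<lambda>k. k ^ g) ` {1..}"
      have "\<not> is_gamma_power g x"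
      proof
        assume "is_gamma_power g x"
        then obtain d where "d \<ge> 1" "x = d ^ g" unfolding is_gamma_power_def by blast
        then show False using x by auto
      qed
      then show "c x = 0" unfolding c_def restr_power_def by simp
    qed simp
    also have "\<dots> = infsum (c \<circ> (\<lambda>k. k ^ g)) {1..}"
      using infsum_reindex[OF inj[OF j]] unfolding g_def by blast
    also have "\<dots> = infsum (b j) {1..}"
    proof (rule infsum_cong)
      fix k :: nat assume "k \<in> {1..}"
      then have "is_gamma_power g (k ^ g)" unfolding is_gamma_power_def by auto
      then show "(c \<circ> (\<lambda>k. k ^ g)) k = b j k"
        unfolding c_def b_def a_def restr_power_def g_def o_def by simp
    qed
    finally show ?thesis unfolding g_def .
  qed
  have "(\<Prod>j\<in>{1..m+1}. dirichlet_L s (restr_power (\<gamma> (j - 1)) (f j))) = (\<Prod>j\<in>{1..m+1}. infsum (b j) {1..})"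
    using Lj by (rule prod.cong[OF refl])
  also have "\<dots> = infsum H PK"
    unfolding H_def PK_def by (rule infsum_prod_PiE_abs[symmetric]) (use b_abs in auto)
  finally have prodL: "(\<Prod>j\<in>{1..m+1}. dirichlet_L s (restr_power (\<gamma> (j - 1)) (f j))) = infsum H PK" .
  have "Infinite_Set_Sum.abs_summable_on (b j) {1..}" if "j \<in> {1..m+1}" for j
    using abs_summable_equivalent b_abs[OF that] by blast
  then have "Infinite_Set_Sum.abs_summable_on H PK"
    unfolding H_def PK_def by (intro abs_summable_on_prod_PiE) auto
  then have "(\<lambda>k. norm (H k)) summable_on PK" using abs_summable_equivalent by blast
  then have Hsum: "H summable_on PK" using summable_on_iff_abs_summable_on_complex by blast
  have Npos: "N k \<ge> 1" if "k \<in> PK" for k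
    unfolding N_def using that unfolding PK_def by (intro prod_ge_1 one_le_power) (auto simp: PiE_iff)
  have H_eq: "H k = (\<Prod>j\<in>{1..m+1}. f j (k j ^ \<gamma> (j - 1))) * of_nat (N k) powr (- s)" for k
  proof -
    have "H k = (\<Prod>j\<in>{1..m+1}. f j (k j ^ \<gamma> (j - 1)) * of_nat (k j ^ \<gamma> (j - 1)) powr (- s))"
      unfolding H_def b_def a_def ..
    also have "\<dots> = (\<Prod>j\<in>{1..m+1}. f j (k j ^ \<gamma> (j - 1))) * (\<Prod>j\<in>{1..m+1}. of_nat (k j ^ \<gamma> (j - 1)) powr (- s))"
      by (rule prod.distrib)
    also have "(\<Prod>j\<in>{1..m+1}. (of_nat (k j ^ \<gamma> (j - 1)) :: complex) powr (- s)) = of_nat (N k) powr (- s)"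
      unfolding N_def by (rule prod_nat_powr) simp
    finally show ?thesis .
  qed
  define h where "h = (\<lambda>(n::nat, k::nat\<Rightarrow>nat). H k)"
  define Sg where "Sg = Sigma {1::nat..} Tn"
  have w1: "\<And>k. k \<in> PK \<Longrightarrow> snd (N k, k) = k" by simp
  have w2: "\<And>k. k \<in> PK \<Longrightarrow> (N k, k) \<in> Sg" unfolding Sg_def Tn_def using Npos by auto
  have w3: "\<And>p. p \<in> Sg \<Longrightarrow> (N (snd p), snd p) = p" unfolding Sg_def Tn_def by auto
  have w4: "\<And>p. p \<in> Sg \<Longrightarrow> snd p \<in> PK" unfolding Sg_def Tn_def by auto
  have w5: "\<And>k. k \<in> PK \<Longrightarrow> h (N k, k) = H k" unfolding h_def by simp
  have hsum: "h summable_on Sg"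
    using summable_on_reindex_bij_witness[of PK snd "\<lambda>k. (N k, k)" Sg h H, OF w1 w2 w3 w4 w5] Hsum by blast
  have "infsum H PK = infsum h Sg"
    using infsum_reindex_bij_witness[of PK snd "\<lambda>k. (N k, k)" Sg h H, OF w1 w2 w3 w4 w5] by simp
  also have "\<dots> = infsum (\<lambda>n. infsum (\<lambda>k. h (n, k)) (Tn n)) {1..}"
    using infsum_Sigma_banach[of h "{1..}" Tn] hsum unfolding Sg_def by simp
  finally have HG1: "infsum H PK = infsum (\<lambda>n. infsum (\<lambda>k. H k) (Tn n)) {1..}" unfolding h_def by simp
  have outer_sum: "(\<lambda>n. infsum (\<lambda>k. H k) (Tn n)) summable_on {1..}"
    using summable_on_Sigma_banach[of "\<lambda>n k. H k" "{1..}" Tn] hsum unfolding h_def Sg_def by simp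
  have inner: "infsum (\<lambda>k. H k) (Tn n) = G n" if n: "n \<in> {1..}" for n
  proof -
    have fin: "finite (Tn n)"
    proof (rule finite_subset)
      show "Tn n \<subseteq> PiE {1..m+1} (\<lambda>_. {1..n})"
      proof
        fix k assume k: "k \<in> Tn n"
        then have kP: "k \<in> PK" and Nk: "N k = n" unfolding Tn_def by auto
        show "k \<in> PiE {1..m+1} (\<lambda>_. {1..n})"
        proof (rule PiE_I)
          fix j assume j: "j \<in> {1..m+1}"
          have k1: "k j \<ge> 1" using kP j unfolding PK_def by (auto simp: PiE_iff)
          have "k j ^ \<gamma> (j - 1) dvd N k" unfolding N_def using j by (intro dvd_prodI) auto
          then have "k j ^ \<gamma> (j - 1) \<le> n" using Nk n by (intro dvd_imp_le) auto
          moreover have "k j \<le> k j ^ \<gamma> (j - 1)" using k1 gpos[OF j] by (intro self_le_power) auto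
          ultimately show "k j \<in> {1..n}" using k1 by auto
        next
          fix j assume "j \<notin> {1..m+1}"
          then show "k j = undefined" using kP unfolding PK_def by (auto simp: PiE_iff extensional_def)
        qed
      qed
    qed (simp add: finite_PiE)
    have "infsum (\<lambda>k. H k) (Tn n) = (\<Sum>k\<in>Tn n. H k)" using fin by simp
    also have "\<dots> = (\<Sum>k\<in>Tn n. (\<Prod>j\<in>{1..m+1}. f j (k j ^ \<gamma> (j - 1))) * of_nat n powr (- s))"
      by (rule sum.cong[OF refl]) (simp add: H_eq Tn_def)
    also have "\<dots> = (\<Sum>k\<in>Tn n. \<Prod>j\<in>{1..m+1}. f j (k j ^ \<gamma> (j - 1))) * of_nat n powr (- s)"
      by (rule sum_distrib_right[symmetric])
    also have "(\<Sum>k\<in>Tn n. \<Prod>j\<in>{1..m+1}. f j (k j ^ \<gamma> (j - 1))) = gconv m \<gamma> f n"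
      unfolding Tn_def PK_def N_def
      by (rule comb[OF assms(1-4), symmetric]) (use n in auto)
    finally show ?thesis unfolding G_def .
  qed
  have Gsum: "G summable_on {1..}"
    using outer_sum inner summable_on_cong by (metis (no_types, lifting))
  have HG: "infsum H PK = infsum G {1..}"
    using HG1 inner infsum_cong by (metis (no_types, lifting))
  have "dirichlet_L s (gconv m \<gamma> f) = (\<Sum>n. G (Suc n))"
    unfolding dirichlet_L_def G_def ..
  also have "\<dots> = infsum G {1..}" by (rule series_to_infsum(2)[OF infsum_to_series[OF Gsum]])
  finally show ?thesis using prodL HG by simp
qed

end
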